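(* Let $\alpha\in(0,1)$, $\delta>0$, $\epsilon>0$, and let $\lambda$ satisfy $0<\lambda<\alpha\,v_{\min}/s_{\max}$. Let $(\bar y,\bar C)$ be an optimal solution of the LP. Then for every task $T_{i,j}\in\mathcal T$, $$\bar C_{i,j}\ge(1-\alpha)\,\tau_{t^\alpha_{i,j}},$$ where $t^\alpha_{i,j}=\min\{\ell:\sum_{t=0}^\ell\sum_{s\in\mathcal V}\bar y_{i,j,s,t}|I_t|/p_{i,j,s}\ge\alpha\}$.
   Context: Problem MR. Jobs $\mathcal J=\{1,\dots,n\}$, processors $\mathcal P=\{1,\dots,m\}$. Job $j$ has weight $w_j>0$, release date $r_j\ge0$, and a nonempty set of Map tasks and a nonempty set of Reduce tasks, preassigned to processors with at most one task of each job per processor; $T_{i,j}$ is the task of job $j$ on processor $i$, with work $v_{i,j}\ge0$; $\mathcal T,\mathcal M,\mathcal R$ are the sets of all, Map, Reduce tasks. Running at speed $s$ uses power $s^\beta$ ($\beta>1$ fixed); $E>0$ is the energy budget. Notation: $w_{\min},w_{\max}$ min/max weights, $r_{\max}=\max_j r_j$, $v_{\max}=\max v_{i,j}$, $v_{\min}=\min\{v_{i,j}:v_{i,j}>0\}$, $t_{\max}=\frac{w_{\max}}{w_{\min}}\big(nr_{\max}+n(n+1)(|\mathcal T|v_{\max}^\beta/E)^{1/(\beta-1)}\big)$, $s_L=v_{\min}/t_{\max}$, $s_U=(E/v_{\min})^{1/(\beta-1)}$, $k=\lceil\log_{1+\epsilon}(s_U/s_L)\rceil$, $\mathcal V=\{s_L(1+\epsilon)^\ell:0\le\ell\le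 k\}$, $s_{\max}=s_L(1+\epsilon)^k$. LP: let $u$ be the least integer with $\lambda(1+\delta)^{u-1}\ge t_{\max}$, $\tau_0=0$, $\tau_t=\lambda(1+\delta)^{t-1}$ ($1\le t\le u+1$), $I_t=(\tau_t,\tau_{t+1}]$ of length $|I_t|$, $p_{i,j,s}=v_{i,j}/s$. Variables $y_{i,j,s,t},C_{i,j},C_j\ge0$. Minimize $\sum_jw_jC_j$ s.t. (1) $\sum_s\sum_{t=0}^u y_{i,j,s,t}|I_t|/p_{i,j,s}=1$ for all tasks; (2) $\sum_{j}\sum_s y_{i,j,s,t}\le1$ for all $i,t$; (3) $C_{i,j}\ge\frac12\sum_s y_{i,j,s,0}|I_0|(\frac1{p_{i,j,s}}+1)+\sum_{t=1}^u\sum_s(\frac{y_{i,j,s,t}|I_t|}{p_{i,j,s}}\tau_t+\frac12y_{i,j,s,t}|I_t|)$; (4) $C_j\ge C_{i,j}$; (5) $\sum_{T_{i,j}}\sum_s\sum_t y_{i,j,s,t}|I_t|s^\beta\le E$; (6) for $T_{i,j}\in\mathcal M$, $T_{i',j}\in\mathcal R$, $0\le\ell\le u$: $\sum_{t=0}^\ell\sum_s\frac{y_{i,j,s,t}|I_t|}{p_{i,j,s}}\ge\sum_{t=0}^\ell\sum_s\frac{y_{i',j,s,t}|I_t|}{p_{i',j,s}}$; (7) $y_{i,j,s,t}=0$ whenever $\tau_t<r_j$. *)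

theory Defs
  imports Complex_Main
begin

text \<open>An instance of problem MR. Task T_{i,j} is the pair (i,j): processor i, job j.\<close>
record mr_inst =
  nJ :: nat
  mP :: nat
  wt :: "nat \<Rightarrow> real"
  rel :: "nat \<Rightarrow> real"
  MapT :: "(nat \<times> nat) set"
  RedT :: "(nat \<times> nat) set"
  work :: "nat \<Rightarrow> nat \<Rightarrow> real"
  beta :: real
  energy :: real

definition tasks :: "mr_inst \<Rightarrow> (nat \<times> nat) set" where
  "tasks I = MapT I \<union> RedT I"

definition valid_instance :: "mr_inst \<Rightarrow> bool" where
  "valid_instance I \<longleftrightarrow>
     (\<forall>j\<in>{1..nJ I}. wt I j > 0 \<and> rel I j \<ge> 0) \<and>
     MapT I \<subseteq> {1..mP I} \<times> {1..nJ I} \<and> RedT I \<subseteq> {1..mP I} \<times> {1..nJ I} \<and>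
     MapT I \<inter> RedT I = {} \<and>
     (\<forall>j\<in>{1..nJ I}. (\<exists>i. (i,j) \<in> MapT I) \<and> (\<exists>i. (i,j) \<in> RedT I)) \<and>
     (\<forall>(i,j)\<in>tasks I. work I i j \<ge> 0) \<and>
     beta I > 1 \<and> energy I > 0"

definition wmin :: "mr_inst \<Rightarrow> real" where "wmin I = Min (wt I ` {1..nJ I})"
definition wmax :: "mr_inst \<Rightarrow> real" where "wmax I = Max (wt I ` {1..nJ I})"
definition rmax :: "mr_inst \<Rightarrow> real" where "rmax I = Max (rel I ` {1..nJ I})"
definition vmax :: "mr_inst \<Rightarrow> real" where
  "vmax I = Max ((\<lambda>(i,j). work I i j) ` tasks I)"
definition vmin :: "mr_inst \<Rightarrow> real" where
  "vmin I = Min {work I i j | i j. (i,j) \<in> tasks I \<and> work I i j > 0}"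

definition tmax :: "mr_inst \<Rightarrow> real" where
  "tmax I = (wmax I / wmin I) *
     (real (nJ I) * rmax I + real (nJ I) * real (nJ I + 1) *
        (real (card (tasks I)) * vmax I powr beta I / energy I) powr (1 / (beta I - 1)))"

definition sL :: "mr_inst \<Rightarrow> real" where "sL I = vmin I / tmax I"
definition sU :: "mr_inst \<Rightarrow> real" where
  "sU I = (energy I / vmin I) powr (1 / (beta I - 1))"
definition kk :: "mr_inst \<Rightarrow> real \<Rightarrow> int" where
  "kk I \<epsilon> = \<lceil>log (1 + \<epsilon>) (sU I / sL I)\<rceil>"
definition speeds :: "mr_inst \<Rightarrow> real \<Rightarrow> real set" where
  "speeds I \<epsilon> = (\<lambda>l::nat. sL I * (1 + \<epsilon>) ^ l) ` {l. int l \<le> kk I \<epsilon>}"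
definition smax :: "mr_inst \<Rightarrow> real \<Rightarrow> real" where
  "smax I \<epsilon> = sL I * (1 + \<epsilon>) ^ nat (kk I \<epsilon>)"

definition uu :: "mr_inst \<Rightarrow> real \<Rightarrow> real \<Rightarrow> nat" where
  "uu I \<delta> lam = (LEAST u::nat. lam * (1 + \<delta>) powr (real u - 1) \<ge> tmax I)"

definition tau :: "real \<Rightarrow> real \<Rightarrow> nat \<Rightarrow> real" where
  "tau \<delta> lam t = (if t = 0 then 0 else lam * (1 + \<delta>) ^ (t - 1))"

definition Ilen :: "real \<Rightarrow> real \<Rightarrow> nat \<Rightarrow> real" where
  "Ilen \<delta> lam t = tau \<delta> lam (Suc t) - tau \<delta> lam t"

definition ptime :: "mr_inst \<Rightarrow> nat \<Rightarrow> nat \<Rightarrow> real \<Rightarrow> real" where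
  "ptime I i j s = work I i j / s"

definition frac :: "mr_inst \<Rightarrow> real \<Rightarrow> real \<Rightarrow> (nat \<Rightarrow> nat \<Rightarrow> real \<Rightarrow> nat \<Rightarrow> real)
                     \<Rightarrow> nat \<Rightarrow> nat \<Rightarrow> real \<Rightarrow> nat \<Rightarrow> real" where
  "frac I \<delta> lam y i j s t = y i j s t * Ilen \<delta> lam t / ptime I i j s"

definition lp_feasible ::
  "mr_inst \<Rightarrow> real \<Rightarrow> real \<Rightarrow> real \<Rightarrow> (nat \<Rightarrow> nat \<Rightarrow> real \<Rightarrow> nat \<Rightarrow> real)
   \<Rightarrow> (nat \<Rightarrow> nat \<Rightarrow> real) \<Rightarrow> (nat \<Rightarrow> real) \<Rightarrow> bool" where
  "lp_feasible I \<epsilon> \<delta> lam y Ct Cj \<longleftrightarrow>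
    (let T = tasks I; V = speeds I \<epsilon>; u = uu I \<delta> lam; L = Ilen \<delta> lam;
         f = frac I \<delta> lam y in
     (\<forall>(i,j)\<in>T. \<forall>s\<in>V. \<forall>t\<le>u. y i j s t \<ge> 0) \<and>
     (\<forall>(i,j)\<in>T. Ct i j \<ge> 0) \<and> (\<forall>j\<in>{1..nJ I}. Cj j \<ge> 0) \<and>
     \<comment> \<open>(1)\<close>
     (\<forall>(i,j)\<in>T. (\<Sum>s\<in>V. \<Sum>t\<le>u. f i j s t) = 1) \<and>
     \<comment> \<open>(2)\<close>
     (\<forall>i\<in>{1..mP I}. \<forall>t\<le>u. (\<Sum>j\<in>{j\<in>{1..nJ I}. (i,j) \<in> T}. \<Sum>s\<in>V. y i j s t) \<le> 1) \<and>
     \<comment> \<open>(3)\<close>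
     (\<forall>(i,j)\<in>T. Ct i j \<ge>
        1/2 * (\<Sum>s\<in>V. y i j s 0 * L 0 * (1 / ptime I i j s + 1))
        + (\<Sum>t\<in>{1..u}. \<Sum>s\<in>V. f i j s t * tau \<delta> lam t + 1/2 * y i j s t * L t)) \<and>
     \<comment> \<open>(4)\<close>
     (\<forall>(i,j)\<in>T. Cj j \<ge> Ct i j) \<and>
     \<comment> \<open>(5)\<close>
     (\<Sum>(i,j)\<in>T. \<Sum>s\<in>V. \<Sum>t\<le>u. y i j s t * L t * s powr beta I) \<le> energy I \<and>
     \<comment> \<open>(6)\<close>
     (\<forall>(i,j)\<in>MapT I. \<forall>i'. (i',j) \<in> RedT I \<longrightarrow> (\<forall>l\<le>u.
        (\<Sum>t\<le>l. \<Sum>s\<in>V. f i j s t) \<ge> (\<Sum>t\<le>l. \<Sum>s\<in>V. f i' j s t))) \<and>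
     \<comment> \<open>(7)\<close>
     (\<forall>(i,j)\<in>T. \<forall>s\<in>V. \<forall>t\<le>u. tau \<delta> lam t < rel I j \<longrightarrow> y i j s t = 0))"

definition lp_objective :: "mr_inst \<Rightarrow> (nat \<Rightarrow> real) \<Rightarrow> real" where
  "lp_objective I Cj = (\<Sum>j\<in>{1..nJ I}. wt I j * Cj j)"

definition lp_optimal ::
  "mr_inst \<Rightarrow> real \<Rightarrow> real \<Rightarrow> real \<Rightarrow> (nat \<Rightarrow> nat \<Rightarrow> real \<Rightarrow> nat \<Rightarrow> real)
   \<Rightarrow> (nat \<Rightarrow> nat \<Rightarrow> real) \<Rightarrow> (nat \<Rightarrow> real) \<Rightarrow> bool" where
  "lp_optimal I \<epsilon> \<delta> lam y Ct Cj \<longleftrightarrow>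
     lp_feasible I \<epsilon> \<delta> lam y Ct Cj \<and>
     (\<forall>y' Ct' Cj'. lp_feasible I \<epsilon> \<delta> lam y' Ct' Cj' \<longrightarrow>
        lp_objective I Cj \<le> lp_objective I Cj')"

definition t_alpha ::
  "mr_inst \<Rightarrow> real \<Rightarrow> real \<Rightarrow> real \<Rightarrow> real \<Rightarrow> (nat \<Rightarrow> nat \<Rightarrow> real \<Rightarrow> nat \<Rightarrow> real)
   \<Rightarrow> nat \<Rightarrow> nat \<Rightarrow> nat" where
  "t_alpha I \<epsilon> \<delta> lam \<alpha> y i j =
     (LEAST l. l \<le> uu I \<delta> lam \<and>
        (\<Sum>t\<le>l. \<Sum>s\<in>speeds I \<epsilon>. frac I \<delta> lam y i j s t) \<ge> \<alpha>)"

end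

theory Submission
  imports Defs
begin

lemma tau_nonneg: "\<delta> > 0 \<Longrightarrow> lam > 0 \<Longrightarrow> tau \<delta> lam t \<ge> 0"
  by (simp add: tau_def)

lemma tau_mono: "\<delta> > 0 \<Longrightarrow> lam > 0 \<Longrightarrow> t \<le> t' \<Longrightarrow> tau \<delta> lam t \<le> tau \<delta> lam t'"
  apply (cases "t = 0")
   apply (simp add: tau_def)
  apply (simp add: tau_def)
  done

theorem lemma4:
  fixes I :: mr_inst and \<alpha> \<delta> \<epsilon> lam :: real
    and y :: "nat \<Rightarrow> nat \<Rightarrow> real \<Rightarrow> nat \<Rightarrow> real"
    and Ct :: "nat \<Rightarrow> nat \<Rightarrow> real" and Cj :: "nat \<Rightarrow> real"
  assumes "valid_instance I"
    and "0 < \<alpha>" "\<alpha> < 1" "\<delta> > 0" "\<epsilon> > 0"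
    and "0 < lam" "lam < \<alpha> * vmin I / smax I \<epsilon>"
    and "lp_optimal I \<epsilon> \<delta> lam y Ct Cj"
    and "(i, j) \<in> tasks I"
  shows "Ct i j \<ge> (1 - \<alpha>) * tau \<delta> lam (t_alpha I \<epsilon> \<delta> lam \<alpha> y i j)"
proof -
  define V where "V = speeds I \<epsilon>"
  define u where "u = uu I \<delta> lam"
  define f where "f = frac I \<delta> lam y i j"
  define F where "F = (\<lambda>l. \<Sum>t\<le>l. \<Sum>s\<in>V. f s t)"
  have feas: "lp_feasible I \<epsilon> \<delta> lam y Ct Cj" using assms(8) by (simp add: lp_optimal_def)
  have ynn: "\<And>s t. s \<in> V \<Longrightarrow> t \<le> u \<Longrightarrow> y i j s t \<ge> 0"
    using feas assms(9) unfolding lp_feasible_def Let_def V_def u_def by blast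
  have Ctnn: "Ct i j \<ge> 0"
    using feas assms(9) unfolding lp_feasible_def Let_def by blast
  have one: "(\<Sum>s\<in>V. \<Sum>t\<le>u. f s t) = 1"
    using feas assms(9) unfolding lp_feasible_def Let_def V_def u_def f_def by blast
  have C3: "Ct i j \<ge>
        1/2 * (\<Sum>s\<in>V. y i j s 0 * Ilen \<delta> lam 0 * (1 / ptime I i j s + 1))
        + (\<Sum>t\<in>{1..u}. \<Sum>s\<in>V. f s t * tau \<delta> lam t + 1/2 * y i j s t * Ilen \<delta> lam t)"
    using feas assms(9) unfolding lp_feasible_def Let_def V_def u_def f_def by blast
  have finV: "finite V" unfolding V_def speeds_def
  proof (rule finite_imageI)
    have "{l. int l \<le> kk I \<epsilon>} \<subseteq> {..nat (kk I \<epsilon>)}" by auto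
    then show "finite {l. int l \<le> kk I \<epsilon>}" using finite_subset by blast
  qed
  have wnn: "work I i j \<ge> 0" using assms(1,9) unfolding valid_instance_def by auto
  have wpos: "work I i j > 0"
  proof (rule ccontr)
    assume "\<not> work I i j > 0"
    then have "work I i j = 0" using wnn by auto
    then have "\<And>s t. f s t = 0" by (simp add: f_def frac_def ptime_def)
    then show False using one by simp
  qed
  have fin_tasks: "finite (tasks I)"
  proof -
    have "tasks I \<subseteq> {1..mP I} \<times> {1..nJ I}" using assms(1)
      unfolding valid_instance_def tasks_def by auto
    then show ?thesis using finite_subset by blast
  qed
  have vminpos: "vmin I > 0"
  proof -
    let ?W = "{work I i j | i j. (i,j) \<in> tasks I \<and> work I i j > 0}"
    have "?W = (\<lambda>(i,j). work I i j) ` {p \<in> tasks I. (\<lambda>(i,j). work I i j) p > 0}" by auto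
    then have finW: "finite ?W" using fin_tasks by simp
    have "work I i j \<in> ?W" using assms(9) wpos by blast
    then have ne: "?W \<noteq> {}" by blast
    have "Min ?W \<in> ?W" using Min_in[OF finW ne] .
    then show ?thesis unfolding vmin_def by auto
  qed
  have smaxpos: "smax I \<epsilon> > 0"
  proof (rule ccontr)
    assume "\<not> smax I \<epsilon> > 0"
    then have "\<alpha> * vmin I / smax I \<epsilon> \<le> 0"
      using assms(2) vminpos by (simp add: divide_nonneg_nonpos)
    then show False using assms(6,7) by linarith
  qed
  have sLpos: "sL I > 0"
  proof -
    have "(1 + \<epsilon>) ^ nat (kk I \<epsilon>) > 0" using assms(5) by simp
    then show ?thesis using smaxpos unfolding smax_def using zero_less_mult_pos2 by blast
  qed
  have spos: "\<And>s. s \<in> V \<Longrightarrow> s > 0"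
    unfolding V_def speeds_def using sLpos assms(5) by auto
  have Lnn: "\<And>t. Ilen \<delta> lam t \<ge> 0"
    unfolding Ilen_def using tau_mono[OF assms(4,6)] by (simp add: tau_mono[OF assms(4,6)])
  have fnn: "\<And>s t. s \<in> V \<Longrightarrow> t \<le> u \<Longrightarrow> f s t \<ge> 0"
  proof -
    fix s t assume s: "s \<in> V" and t: "t \<le> u"
    have a: "0 \<le> y i j s t * Ilen \<delta> lam t" using ynn[OF s t] Lnn[of t] by simp
    have b: "0 < work I i j / s" using wpos spos[OF s] by simp
    show "f s t \<ge> 0" unfolding f_def frac_def ptime_def
      using divide_nonneg_pos[OF a b] .
  qed
  have Fu: "F u = 1" unfolding F_def using one sum.swap by (metis (no_types))
  define ta where "ta = t_alpha I \<epsilon> \<delta> lam \<alpha> y i j"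
  have ta_eq: "ta = (LEAST l. l \<le> u \<and> F l \<ge> \<alpha>)"
    unfolding ta_def t_alpha_def F_def f_def V_def u_def by simp
  have exu: "u \<le> u \<and> F u \<ge> \<alpha>" using Fu assms(3) by simp
  have ta_le: "ta \<le> u" using LeastI[of "\<lambda>l. l \<le> u \<and> F l \<ge> \<alpha>", OF exu] ta_eq by simp
  have below: "\<And>l. l < ta \<Longrightarrow> F l < \<alpha>"
  proof -
    fix l assume "l < ta"
    then have "\<not> (l \<le> u \<and> F l \<ge> \<alpha>)" using not_less_Least ta_eq by metis
    then show "F l < \<alpha>" using \<open>l < ta\<close> ta_le by auto
  qed
  show ?thesis
  proof (cases "ta = 0")
    case True
    then show ?thesis using Ctnn unfolding ta_def by (simp add: tau_def)
  next
    case False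
    have split: "{..u} = {..ta - 1} \<union> {ta..u}" using False ta_le by auto
    have "F u = F (ta - 1) + (\<Sum>t\<in>{ta..u}. \<Sum>s\<in>V. f s t)"
      unfolding F_def split using False by (subst sum.union_disjoint) auto
    then have tail: "(\<Sum>t\<in>{ta..u}. \<Sum>s\<in>V. f s t) \<ge> 1 - \<alpha>"
      using Fu below[of "ta - 1"] False by simp
    have A0: "0 \<le> 1/2 * (\<Sum>s\<in>V. y i j s 0 * Ilen \<delta> lam 0 * (1 / ptime I i j s + 1))"
    proof -
      have "\<And>s. s \<in> V \<Longrightarrow> 0 \<le> y i j s 0 * Ilen \<delta> lam 0 * (1 / ptime I i j s + 1)"
      proof -
        fix s assume s: "s \<in> V"
        have "1 / ptime I i j s \<ge> 0" using spos[OF s] wpos by (simp add: ptime_def)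
        then show "0 \<le> y i j s 0 * Ilen \<delta> lam 0 * (1 / ptime I i j s + 1)"
          using ynn[OF s] Lnn by simp
      qed
      then show ?thesis by (simp add: sum_nonneg)
    qed
    have sub: "{ta..u} \<subseteq> {1..u}" using False by auto
    have "(\<Sum>t\<in>{ta..u}. \<Sum>s\<in>V. f s t * tau \<delta> lam t)
        \<le> (\<Sum>t\<in>{1..u}. \<Sum>s\<in>V. f s t * tau \<delta> lam t)"
      apply (rule sum_mono2[OF _ sub]) apply simp
      apply (rule sum_nonneg) using fnn tau_nonneg[OF assms(4,6)] by auto
    also have "\<dots> \<le> (\<Sum>t\<in>{1..u}. \<Sum>s\<in>V. f s t * tau \<delta> lam t + 1/2 * y i j s t * Ilen \<delta> lam t)"
      apply (rule sum_mono, rule sum_mono) using ynn Lnn by (simp add: mult_nonneg_nonneg)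
    finally have B: "(\<Sum>t\<in>{ta..u}. \<Sum>s\<in>V. f s t * tau \<delta> lam t) \<le> Ct i j"
      using C3 A0 by linarith
    have "tau \<delta> lam ta * (\<Sum>t\<in>{ta..u}. \<Sum>s\<in>V. f s t)
        = (\<Sum>t\<in>{ta..u}. \<Sum>s\<in>V. f s t * tau \<delta> lam ta)"
      by (simp add: sum_distrib_left sum_distrib_right mult.commute)
    also have "\<dots> \<le> (\<Sum>t\<in>{ta..u}. \<Sum>s\<in>V. f s t * tau \<delta> lam t)"
      apply (rule sum_mono, rule sum_mono)
      apply (rule mult_left_mono) using fnn tau_mono[OF assms(4,6)] by auto
    finally have "tau \<delta> lam ta * (\<Sum>t\<in>{ta..u}. \<Sum>s\<in>V. f s t) \<le> Ct i j" using B by linarith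
    moreover have "(1 - \<alpha>) * tau \<delta> lam ta \<le> tau \<delta> lam ta * (\<Sum>t\<in>{ta..u}. \<Sum>s\<in>V. f s t)"
      using tail tau_nonneg[OF assms(4,6), of ta] by (metis mult.commute mult_left_mono)
    ultimately show ?thesis unfolding ta_def by linarith
  qed
qed

end
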